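(* Let $R>0$, $t\neq 0$, $c=\frac{1-t^2}{1+t^2}$, $s=\frac{2t}{1+t^2}$, and set $k=1$. Consider the trisector $$T=\{(x,y,z)\in\mathbb{R}^3:\ y^2-(xs-yc)^2+2z-1=0,\ \bigl(x^2-2z+R^2+1\bigr)^2-4R^2(x^2+y^2)=0\}.$$ Then this degree-eight trisector is reducible and splits into two algebraic space curves of degree four. These two quartic components intersect in exactly two real affine points, $$\Bigl(Rc,Rs,\tfrac{1-R^2s^2}{2}\Bigr)\quad\text{and}\quad\Bigl(-Rc,-Rs,\tfrac{1-R^2s^2}{2}\Bigr),$$ and each of these two points is an ordinary real node of the trisector.
   Context: This is the trisector at parameter value $k=1$ of the $x$-axis, the line through $(0,0,1)$ with direction $(c,s,0)$, and the circle of radius $R$ centered at $(0,0,k)$ in the plane $z=k$. An ordinary real node is a point where the curve is locally the union of two smooth branches with distinct tangent lines. *)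

theory Defs
  imports "HOL-Analysis.Analysis" "HOL-Computational_Algebra.Polynomial"
begin

type_synonym pt3 = "real \<times> real \<times> real"
type_synonym cpt3 = "complex \<times> complex \<times> complex"

definition tris_P :: "'a::comm_ring_1 \<Rightarrow> 'a \<Rightarrow> 'a \<Rightarrow> 'a \<Rightarrow> 'a \<Rightarrow> 'a" where
  "tris_P s c x y z = y^2 - (x * s - y * c)^2 + 2*z - 1"

definition tris_Q :: "'a::comm_ring_1 \<Rightarrow> 'a \<Rightarrow> 'a \<Rightarrow> 'a \<Rightarrow> 'a" where
  "tris_Q R x y z = (x^2 - 2*z + R^2 + 1)^2 - 4*R^2*(x^2 + y^2)"

definition trisector :: "real \<Rightarrow> real \<Rightarrow> real \<Rightarrow> pt3 set" where
  "trisector R s c = {(x,y,z). tris_P s c x y z = 0 \<and> tris_Q R x y z = 0}"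

definition trisector_C :: "real \<Rightarrow> real \<Rightarrow> real \<Rightarrow> cpt3 set" where
  "trisector_C R s c = {(x,y,z). tris_P (of_real s) (of_real c) x y z = 0
                              \<and> tris_Q (of_real R) x y z = 0}"

text \<open>A real polynomial in x,y,z is represented as an element of real poly poly poly
  (outer variable x, then y, innermost z); it is evaluated at complex points.\<close>

definition eval3 :: "real poly poly poly \<Rightarrow> cpt3 \<Rightarrow> complex" where
  "eval3 p q = (case q of (x,y,z) \<Rightarrow>
     poly (map_poly (\<lambda>a. poly (map_poly (\<lambda>b. poly (map_poly complex_of_real b) z) a) y) p) x)"

definition algebraic_set3 :: "cpt3 set \<Rightarrow> bool" where
  "algebraic_set3 S \<longleftrightarrow> (\<exists>F. finite F \<and> S = {q. \<forall>f\<in>F. eval3 f q = 0})"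

definition cplane :: "cpt3 set \<Rightarrow> bool" where
  "cplane H \<longleftrightarrow> (\<exists>a b c d. (a,b,c) \<noteq> (0,0,0) \<and> H = {(x,y,z). a*x + b*y + c*z = d})"

text \<open>Algebraic space curve (pure dimension one): a nonempty algebraic set without
  isolated points such that through every point of it passes a plane meeting it in
  finitely many points.\<close>

definition space_curve :: "cpt3 set \<Rightarrow> bool" where
  "space_curve C \<longleftrightarrow> algebraic_set3 C \<and> C \<noteq> {} \<and> (\<forall>q\<in>C. q islimpt C)
     \<and> (\<forall>q\<in>C. \<exists>H. cplane H \<and> q \<in> H \<and> finite (C \<inter> H))"

definition space_curve_of_degree :: "cpt3 set \<Rightarrow> nat \<Rightarrow> bool" where
  "space_curve_of_degree C d \<longleftrightarrow> space_curve C
     \<and> (\<forall>H. cplane H \<and> finite (C \<inter> H) \<longrightarrow> card (C \<inter> H) \<le> d)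
     \<and> (\<exists>H. cplane H \<and> finite (C \<inter> H) \<and> card (C \<inter> H) = d)"

definition cpt_of_real :: "pt3 \<Rightarrow> cpt3" where
  "cpt_of_real p = (case p of (x,y,z) \<Rightarrow> (complex_of_real x, complex_of_real y, complex_of_real z))"

definition smooth_curve_on :: "real set \<Rightarrow> (real \<Rightarrow> 'a::real_normed_vector) \<Rightarrow> bool" where
  "smooth_curve_on I g \<longleftrightarrow> (\<exists>D::nat \<Rightarrow> real \<Rightarrow> 'a. (\<forall>t\<in>I. D 0 t = g t)
      \<and> (\<forall>n. \<forall>t\<in>I. (D n has_vector_derivative D (Suc n) t) (at t)))"

definition smooth_branch :: "real \<Rightarrow> (real \<Rightarrow> pt3) \<Rightarrow> pt3 \<Rightarrow> bool" where
  "smooth_branch e g p \<longleftrightarrow> e > 0 \<and> smooth_curve_on {-e<..<e} g \<and> g 0 = p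
     \<and> inj_on g {-e<..<e} \<and> continuous_on (g ` {-e<..<e}) (inv_into {-e<..<e} g)
     \<and> (\<forall>t\<in>{-e<..<e}. vector_derivative g (at t) \<noteq> 0)"

definition ordinary_real_node :: "pt3 set \<Rightarrow> pt3 \<Rightarrow> bool" where
  "ordinary_real_node S p \<longleftrightarrow> p \<in> S \<and> (\<exists>U e g1 g2. open U \<and> p \<in> U
     \<and> smooth_branch e g1 p \<and> smooth_branch e g2 p
     \<and> (\<forall>a. vector_derivative g2 (at 0) \<noteq> a *\<^sub>R vector_derivative g1 (at 0))
     \<and> S \<inter> U = g1 ` {-e<..<e} \<union> g2 ` {-e<..<e})"

end

theory Submission
  imports Defs
begin


lemma map_poly_add_hom:
  assumes "f 0 = 0" "\<And>a b. f (a + b) = f a + f b"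
  shows "map_poly f (p + q) = map_poly f p + map_poly f q"
  by (intro poly_eqI) (simp add: assms coeff_map_poly)

lemma poly_map_hom_mult:
  fixes f :: "'a::comm_ring_1 \<Rightarrow> 'b::comm_ring_1"
  assumes h0: "f 0 = 0" and ha: "\<And>a b. f (a + b) = f a + f b"
    and hm: "\<And>a b. f (a * b) = f a * f b"
  shows "poly (map_poly f (p * q)) x = poly (map_poly f p) x * poly (map_poly f q) x"
proof (induction p)
  case 0 then show ?case by (simp add: h0)
next
  case (pCons a p)
  have "pCons a p * q = smult a q + pCons 0 (p * q)" by simp
  then show ?case using pCons
    by (simp add: map_poly_add_hom[OF h0 ha] map_poly_smult[OF h0 hm] map_poly_pCons[of f, OF h0] h0 algebra_simps)
qed

lemma poly_map_hom_add:
  assumes "f 0 = 0" "\<And>a b. f (a + b) = f a + f b"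
  shows "poly (map_poly f (p + q)) x = poly (map_poly f p) x + poly (map_poly f q) x"
  by (simp add: map_poly_add_hom[OF assms])

lemma hom_minus:
  fixes f :: "'a::comm_ring_1 \<Rightarrow> 'b::comm_ring_1"
  assumes "f 0 = 0" "\<And>a b. f (a + b) = f a + f b"
  shows "f (a - b) = f a - f b"
proof -
  have "f (a - b) + f b = f a" using assms(2)[of "a-b" b] by simp
  then show ?thesis by (simp add: algebra_simps)
qed

lemma poly_map_hom_diff:
  fixes f :: "'a::comm_ring_1 \<Rightarrow> 'b::comm_ring_1"
  assumes h0: "f 0 = 0" and ha: "\<And>a b. f (a + b) = f a + f b"
  shows "poly (map_poly f (p - q)) x = poly (map_poly f p) x - poly (map_poly f q) x"
proof -
  have "poly (map_poly f (p - q)) x + poly (map_poly f q) x = poly (map_poly f p) x"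
    using poly_map_hom_add[OF assms, of "p-q" q x] by simp
  then show ?thesis by (simp add: algebra_simps)
qed

definition h2 :: "complex \<Rightarrow> real poly \<Rightarrow> complex" where
  "h2 z b = poly (map_poly complex_of_real b) z"
definition h1 :: "complex \<Rightarrow> complex \<Rightarrow> real poly poly \<Rightarrow> complex" where
  "h1 y z a = poly (map_poly (h2 z) a) y"

lemma h2_0: "h2 z 0 = 0" by (simp add: h2_def)
lemma h2_add: "h2 z (a + b) = h2 z a + h2 z b"
  unfolding h2_def by (rule poly_map_hom_add) auto
lemma h2_mult: "h2 z (a * b) = h2 z a * h2 z b"
  unfolding h2_def by (rule poly_map_hom_mult) auto
lemma h1_0: "h1 y z 0 = 0" by (simp add: h1_def)
lemma h1_add: "h1 y z (a + b) = h1 y z a + h1 y z b"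
  unfolding h1_def by (rule poly_map_hom_add) (auto simp: h2_0 h2_add)
lemma h1_mult: "h1 y z (a * b) = h1 y z a * h1 y z b"
  unfolding h1_def by (rule poly_map_hom_mult) (auto simp: h2_0 h2_add h2_mult)

lemma eval3_alt: "eval3 p (x,y,z) = poly (map_poly (h1 y z) p) x"
  unfolding eval3_def h1_def h2_def by simp

lemma eval3_add: "eval3 (p + q) (x,y,z) = eval3 p (x,y,z) + eval3 q (x,y,z)"
  unfolding eval3_alt by (rule poly_map_hom_add) (auto simp: h1_0 h1_add)
lemma eval3_diff: "eval3 (p - q) (x,y,z) = eval3 p (x,y,z) - eval3 q (x,y,z)"
  unfolding eval3_alt by (rule poly_map_hom_diff) (auto simp: h1_0 h1_add)
lemma eval3_mult: "eval3 (p * q) (x,y,z) = eval3 p (x,y,z) * eval3 q (x,y,z)"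
  unfolding eval3_alt by (rule poly_map_hom_mult) (auto simp: h1_0 h1_add h1_mult)
lemma eval3_one: "eval3 1 (x,y,z) = 1"
  by (simp add: eval3_def)
lemma eval3_power: "eval3 (p ^ n) (x,y,z) = eval3 p (x,y,z) ^ n"
  by (induction n) (simp_all only: power_0 power_Suc eval3_one eval3_mult)

definition K3 :: "real \<Rightarrow> real poly poly poly" where "K3 r = [:[:[:r:]:]:]"
definition X3 :: "real poly poly poly" where "X3 = [:0, 1:]"
definition Y3 :: "real poly poly poly" where "Y3 = [:[:0, 1:]:]"
definition Z3 :: "real poly poly poly" where "Z3 = [:[:[:0, 1:]:]:]"

lemma h2_c: "h2 z [:r:] = of_real r" by (simp add: h2_def map_poly_pCons[of complex_of_real])
lemma h2_v: "h2 z [:0,1:] = z" by (simp add: h2_def map_poly_pCons[of complex_of_real])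
lemma h2_1: "h2 z 1 = 1" by (simp add: h2_def)
lemma h1_c: "h1 y z [:a:] = h2 z a" by (simp add: h1_def map_poly_pCons[of "h2 z", OF h2_0])
lemma h1_v: "h1 y z [:0,1:] = y" by (simp add: h1_def map_poly_pCons[of "h2 z", OF h2_0] h2_0 h2_1)
lemma eval3_K: "eval3 (K3 r) (x,y,z) = complex_of_real r"
  by (simp add: K3_def eval3_alt map_poly_pCons[of "h1 y z", OF h1_0] h1_c h2_c)
lemma eval3_X: "eval3 X3 (x,y,z) = x"
  by (simp add: X3_def eval3_alt map_poly_pCons[of "h1 y z", OF h1_0] h1_0 one_pCons h1_c h2_c)
lemma eval3_Y: "eval3 Y3 (x,y,z) = y"
  by (simp add: Y3_def eval3_alt map_poly_pCons[of "h1 y z", OF h1_0] h1_v)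
lemma eval3_Z: "eval3 Z3 (x,y,z) = z"
  by (simp add: Z3_def eval3_alt map_poly_pCons[of "h1 y z", OF h1_0] h1_c h2_v)

lemmas eval3_simps = eval3_add eval3_diff eval3_mult eval3_power eval3_K eval3_X eval3_Y eval3_Z


definition Vf :: "'a::field_char_0 \<Rightarrow> 'a \<Rightarrow> 'a" where "Vf R w = (w^2 - R^2)/(2*R)"
definition phi :: "'a::field_char_0 \<Rightarrow> 'a \<Rightarrow> 'a \<Rightarrow> 'a \<Rightarrow> 'a \<Rightarrow> 'a \<times> 'a \<times> 'a" where
  "phi R sn cn \<sigma> w = (\<sigma> * (w * cn + Vf R w * sn), \<sigma> * (w * sn - Vf R w * cn),
      (1 - (w * sn - Vf R w * cn)^2 + (Vf R w)^2)/2)"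
definition Lf :: "'a::field_char_0 \<Rightarrow> 'a \<Rightarrow> 'a \<Rightarrow> 'a \<Rightarrow> 'a \<Rightarrow> 'a \<Rightarrow> 'a" where
  "Lf R sn cn \<sigma> x y = (x * cn + y * sn)^2 - R^2 - 2 * R * \<sigma> * (x * sn - y * cn)"

lemma Vf_eq: "R \<noteq> 0 \<Longrightarrow> 2 * R * Vf R w = w^2 - R^2"
  by (simp add: Vf_def)

lemma phi_comp:
  assumes "phi R sn cn \<sigma> w = (x,y,z)"
  shows "x = \<sigma> * (w * cn + Vf R w * sn)" "y = \<sigma> * (w * sn - Vf R w * cn)"
    "2 * z = 1 - (w * sn - Vf R w * cn)^2 + (Vf R w)^2"
  using assms by (auto simp: phi_def)

lemma phi_u:
  assumes "sn^2 + cn^2 = 1" "\<sigma>^2 = 1" "phi R sn cn \<sigma> w = (x,y,z)"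
  shows "\<sigma> * (x * cn + y * sn) = w"
  using phi_comp[OF assms(3)] assms(1,2) by algebra

lemma phi_v:
  assumes "sn^2 + cn^2 = 1" "\<sigma>^2 = 1" "phi R sn cn \<sigma> w = (x,y,z)"
  shows "x * sn - y * cn = \<sigma> * Vf R w"
  using phi_comp[OF assms(3)] assms(1,2) by algebra

lemma phi_eqs:
  assumes "R \<noteq> 0" "sn^2 + cn^2 = 1" "\<sigma>^2 = 1" "phi R sn cn \<sigma> w = (x,y,z)"
  shows "tris_P sn cn x y z = 0 \<and> Lf R sn cn \<sigma> x y = 0"
  using phi_comp[OF assms(4)] assms(2,3) Vf_eq[OF assms(1), of w] unfolding tris_P_def Lf_def
  by algebra

lemma eqs_phi:
  assumes "R \<noteq> 0" "sn^2 + cn^2 = 1" "\<sigma>^2 = 1" "tris_P sn cn x y z = 0" "Lf R sn cn \<sigma> x y = 0"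
  shows "(x,y,z) = phi R sn cn \<sigma> (\<sigma> * (x * cn + y * sn))"
proof -
  define w where "w = \<sigma> * (x * cn + y * sn)"
  define V where "V = Vf R w"
  have hV: "2 * R * V = w^2 - R^2" using Vf_eq[OF assms(1)] V_def by blast
  have "2 * R * (V - \<sigma> * (x * sn - y * cn)) = 0"
    using hV assms(3,5) unfolding w_def Lf_def by algebra
  then have V: "V = \<sigma> * (x * sn - y * cn)" using assms(1) by simp
  have x: "x = \<sigma> * (w * cn + V * sn)" using V assms(2,3) unfolding w_def by algebra
  have y: "y = \<sigma> * (w * sn - V * cn)" using V assms(2,3) unfolding w_def by algebra
  have "2 * z = 1 - (w * sn - V * cn)^2 + V^2" using V assms(2,3,4) unfolding w_def tris_P_def by algebra
  then have z: "z = (1 - (w * sn - V * cn)^2 + V^2) / 2" by (simp add: field_simps)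
  show ?thesis unfolding w_def[symmetric] phi_def V_def[symmetric] using x y z by simp
qed

lemma PQ:
  fixes x y z :: "'a::idom"
  assumes "tris_P sn cn x y z = 0" "sn^2 + cn^2 = 1"
  shows "tris_Q R x y z = ((x * cn + y * sn)^2 - R^2 - 2 * R * 1 * (x * sn - y * cn))
     * ((x * cn + y * sn)^2 - R^2 - 2 * R * (-1) * (x * sn - y * cn))"
  using assms unfolding tris_P_def tris_Q_def by algebra


lemma phi_poly:
  fixes R sn cn \<sigma> a b c0 d :: "'a::field_char_0"
  shows "\<exists>p. degree p \<le> 4 \<and> (\<forall>w. poly p w = a * fst (phi R sn cn \<sigma> w)
     + b * fst (snd (phi R sn cn \<sigma> w)) + c0 * snd (snd (phi R sn cn \<sigma> w)) - d)"
proof -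
  define Wp :: "'a poly" where "Wp = [:0,1:]"
  define Vp where "Vp = smult (1/(2*R)) (Wp^2 - [:R^2:])"
  define Xb where "Xb = smult cn Wp + smult sn Vp"
  define Yb where "Yb = smult sn Wp - smult cn Vp"
  define p where "p = smult (a*\<sigma>) Xb + smult (b*\<sigma>) Yb + smult (c0/2) (1 - Yb^2 + Vp^2) - [:d:]"
  have dW: "degree Wp \<le> 1" by (simp add: Wp_def)
  have dW2: "degree (Wp^2) \<le> 2" using degree_power_le[of Wp 2] dW by simp
  have dV: "degree Vp \<le> 2" unfolding Vp_def
    by (rule order_trans[OF degree_smult_le], rule degree_diff_le[OF dW2]) simp
  have f1: "degree (smult cn Wp) \<le> 2" "degree (smult sn Wp) \<le> 2"
    using degree_smult_le[of cn Wp] degree_smult_le[of sn Wp] dW by linarith+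
  have f2: "degree (smult cn Vp) \<le> 2" "degree (smult sn Vp) \<le> 2"
    using degree_smult_le[of cn Vp] degree_smult_le[of sn Vp] dV by linarith+
  have dX: "degree Xb \<le> 2" unfolding Xb_def by (intro degree_add_le f1 f2)
  have dY: "degree Yb \<le> 2" unfolding Yb_def by (intro degree_diff_le f1 f2)
  have dY2: "degree (Yb^2) \<le> 4" using degree_power_le[of Yb 2] dY by simp
  have dV2: "degree (Vp^2) \<le> 4" using degree_power_le[of Vp 2] dV by simp
  have d1: "degree (1 - Yb^2 + Vp^2) \<le> 4"
    by (intro degree_add_le degree_diff_le dY2 dV2) simp
  have e1: "degree (smult (a*\<sigma>) Xb) \<le> 4" using degree_smult_le[of "a*\<sigma>" Xb] dX by linarith
  have e2: "degree (smult (b*\<sigma>) Yb) \<le> 4" using degree_smult_le[of "b*\<sigma>" Yb] dY by linarith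
  have e3: "degree (smult (c0/2) (1 - Yb^2 + Vp^2)) \<le> 4"
    using degree_smult_le[of "c0/2" "1 - Yb^2 + Vp^2"] d1 by linarith
  have e4: "degree (smult (a*\<sigma>) Xb + smult (b*\<sigma>) Yb) \<le> 4" by (rule degree_add_le[OF e1 e2])
  have e5: "degree (smult (a*\<sigma>) Xb + smult (b*\<sigma>) Yb + smult (c0/2) (1 - Yb^2 + Vp^2)) \<le> 4"
    by (rule degree_add_le[OF e4 e3])
  have e6: "degree [:d:] \<le> 4" by simp
  have "degree p \<le> 4" unfolding p_def by (rule degree_diff_le[OF e5 e6])
  moreover have "poly p w = a * fst (phi R sn cn \<sigma> w)
     + b * fst (snd (phi R sn cn \<sigma> w)) + c0 * snd (snd (phi R sn cn \<sigma> w)) - d" for w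
  proof -
    have pV: "poly Vp w = Vf R w"
      by (simp add: Vp_def Wp_def Vf_def)
    have pX: "poly Xb w = cn * w + sn * Vf R w" by (simp add: Xb_def pV Wp_def)
    have pY: "poly Yb w = sn * w - cn * Vf R w" by (simp add: Yb_def pV Wp_def)
    show ?thesis by (simp add: p_def pX pY pV phi_def algebra_simps add_divide_distrib diff_divide_distrib)
  qed
  ultimately show ?thesis by blast
qed


lemma islimpt_range_inj:
  fixes f :: "complex \<Rightarrow> 'b::metric_space"
  assumes "isCont f w" "inj f"
  shows "f w islimpt range f"
proof (unfold islimpt_approachable, intro allI impI)
  fix e :: real assume "e > 0"
  then obtain d where d: "d > 0" "\<And>x'. dist x' w < d \<Longrightarrow> dist (f x') (f w) < e"
    using assms(1) unfolding continuous_at_eps_delta by blast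
  let ?x = "w + of_real (d/2)"
  have "dist ?x w < d" using d(1) by (simp add: dist_norm)
  moreover have "?x \<noteq> w" using d(1) by simp
  ultimately have "f ?x \<noteq> f w" "dist (f ?x) (f w) < e"
    using d(2) assms(2) by (auto simp: inj_eq)
  then show "\<exists>x'\<in>range f. x' \<noteq> f w \<and> dist x' (f w) < e" by blast
qed

lemma phi_polys:
  fixes R sn cn \<sigma> :: "'a::field_char_0"
  shows "\<exists>p1 p2 p3. \<forall>w. phi R sn cn \<sigma> w = (poly p1 w, poly p2 w, poly p3 w)"
proof -
  obtain p1 where p1: "\<forall>w. poly p1 w = 1 * fst (phi R sn cn \<sigma> w)
     + 0 * fst (snd (phi R sn cn \<sigma> w)) + 0 * snd (snd (phi R sn cn \<sigma> w)) - 0"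
    using phi_poly by blast
  obtain p2 where p2: "\<forall>w. poly p2 w = 0 * fst (phi R sn cn \<sigma> w)
     + 1 * fst (snd (phi R sn cn \<sigma> w)) + 0 * snd (snd (phi R sn cn \<sigma> w)) - 0"
    using phi_poly by blast
  obtain p3 where p3: "\<forall>w. poly p3 w = 0 * fst (phi R sn cn \<sigma> w)
     + 0 * fst (snd (phi R sn cn \<sigma> w)) + 1 * snd (snd (phi R sn cn \<sigma> w)) - 0"
    using phi_poly by blast
  show ?thesis using p1 p2 p3 by (intro exI[of _ p1] exI[of _ p2] exI[of _ p3]) auto
qed

lemma isCont_phi: "isCont (phi R sn cn \<sigma>) (w::complex)"
proof -
  obtain p1 p2 p3 where "\<forall>w. phi R sn cn \<sigma> w = (poly p1 w, poly p2 w, poly p3 w)"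
    using phi_polys by blast
  then have "phi R sn cn \<sigma> = (\<lambda>w. (poly p1 w, poly p2 w, poly p3 w))" by auto
  then show ?thesis by simp
qed


lemma z_identity:
  fixes w :: "'a::field_char_0"
  assumes "q^2 = 1+t^2" "cn*(1+t^2) = 1-t^2" "sn*(1+t^2) = 2*t" "2*R*V = w^2 - R^2"
  shows "(2*R)^2 * (1+t^2)^2 * ((w * sn - V * cn)^2 - V^2) = -4 * ((w - R*(t+q))*(w - R*(t-q))) * ((t*w - R*(q-1))*(t*w - R*(-1-q)))"
proof -
  have A: "(1+t^2)*(w * sn - V * cn - V) = 2*(w*t - V)" using assms(2,3) by algebra
  have B: "(1+t^2)*(w * sn - V * cn + V) = 2*t*(w + t*V)" using assms(2,3) by algebra
  have C: "2*R*(w*t - V) = -((w - R*(t+q))*(w - R*(t-q)))" using assms(1,4) by algebra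
  have D: "2*R*t*(w + t*V) = (t*w - R*(q-1))*(t*w - R*(-1-q))" using assms(1,4) by algebra
  have "(2*R)^2 * (1+t^2)^2 * ((w * sn - V * cn)^2 - V^2) = 4 * (2*R*(w*t - V)) * (2*R*t*(w + t*V))"
    using A B by algebra
  then show ?thesis using C D by simp
qed

lemma z_half:
  fixes w :: "'a::field_char_0"
  assumes "R \<noteq> 0" "t \<noteq> 0" "1 + t^2 \<noteq> 0" "q^2 = 1+t^2" "cn*(1+t^2) = 1-t^2" "sn*(1+t^2) = 2*t"
  shows "snd (snd (phi R sn cn \<sigma> w)) = 1/2 \<longleftrightarrow>
    (w = R*(t+q) \<or> w = R*(t-q) \<or> w = R*(q-1)/t \<or> w = R*(-1-q)/t)"
proof -
  define V where "V = Vf R w"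
  have hV: "2*R*V = w^2 - R^2" using Vf_eq[OF assms(1)] V_def by blast
  have "snd (snd (phi R sn cn \<sigma> w)) = 1/2 \<longleftrightarrow> (w * sn - V * cn)^2 - V^2 = 0"
    by (auto simp: phi_def V_def[symmetric] field_simps)
  also have "\<dots> \<longleftrightarrow> (2*R)^2 * (1+t^2)^2 * ((w * sn - V * cn)^2 - V^2) = 0"
    using assms(1,3) by simp
  also have "\<dots> \<longleftrightarrow> ((w - R*(t+q))*(w - R*(t-q))) * ((t*w - R*(q-1))*(t*w - R*(-1-q))) = 0"
    unfolding z_identity[OF assms(4,5,6) hV] by simp
  also have "\<dots> \<longleftrightarrow> (w = R*(t+q) \<or> w = R*(t-q) \<or> t*w = R*(q-1) \<or> t*w = R*(-1-q))"
    by (simp only: mult_eq_0_iff right_minus_eq disj_assoc)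
  also have "\<dots> \<longleftrightarrow> (w = R*(t+q) \<or> w = R*(t-q) \<or> w = R*(q-1)/t \<or> w = R*(-1-q)/t)"
    using assms(2) by (auto simp: field_simps)
  finally show ?thesis .
qed

lemma node_eqs:
  fixes x :: "'a::field_char_0"
  assumes "R \<noteq> 0" "sn^2 + cn^2 = 1" "tris_P sn cn x y z = 0" "Lf R sn cn 1 x y = 0" "Lf R sn cn (-1) x y = 0"
  shows "x * sn - y * cn = 0 \<and> (x * cn + y * sn)^2 = R^2 \<and> 2*z = 1 - R^2 * sn^2
    \<and> x = (x * cn + y * sn) * cn \<and> y = (x * cn + y * sn) * sn"
proof -
  have "4*R*(x * sn - y * cn) = 0" using assms(4,5) unfolding Lf_def by algebra
  then have v: "x * sn - y * cn = 0" using assms(1) by simp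
  have u: "(x * cn + y * sn)^2 = R^2" using v assms(4) unfolding Lf_def by algebra
  have x: "x = (x * cn + y * sn) * cn" using v assms(2) by algebra
  have y: "y = (x * cn + y * sn) * sn" using v assms(2) by algebra
  have "2*z = 1 - R^2 * sn^2" using v u y assms(3) unfolding tris_P_def by algebra
  then show ?thesis using v u x y by blast
qed


definition PP :: "real \<Rightarrow> real \<Rightarrow> real poly poly poly" where
  "PP sn cn = Y3^2 - (X3 * K3 sn - Y3 * K3 cn)^2 + K3 2 * Z3 - K3 1"
definition LP :: "real \<Rightarrow> real \<Rightarrow> real \<Rightarrow> real \<Rightarrow> real poly poly poly" where
  "LP R sn cn \<sigma> = (X3 * K3 cn + Y3 * K3 sn)^2 - K3 (R^2) - K3 (2*R*\<sigma>) * (X3 * K3 sn - Y3 * K3 cn)"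
definition QP :: "real \<Rightarrow> real poly poly poly" where
  "QP R = (X3^2 - K3 2 * Z3 + K3 (R^2) + K3 1)^2 - K3 4 * K3 (R^2) * (X3^2 + Y3^2)"

lemma eval_PP: "eval3 (PP sn cn) (x,y,z) = tris_P (of_real sn) (of_real cn) x y z"
  by (simp add: PP_def eval3_simps tris_P_def)
lemma eval_LP: "eval3 (LP R sn cn \<sigma>) (x,y,z) = Lf (of_real R) (of_real sn) (of_real cn) (of_real \<sigma>) x y"
  by (simp add: LP_def eval3_simps Lf_def)
lemma eval_QP: "eval3 (QP R) (x,y,z) = tris_Q (of_real R) x y z"
  by (simp add: QP_def eval3_simps tris_Q_def)

locale tri =
  fixes R t cn sn :: real
  assumes R_pos: "R > 0" and t_nz: "t \<noteq> 0"
    and cn_eq: "cn = (1 - t^2)/(1+t^2)" and sn_eq: "sn = 2*t/(1+t^2)"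
begin

lemma tt: "1 + t^2 \<noteq> 0" using add_pos_nonneg[OF zero_less_one zero_le_power2[of t]] by simp

lemma cn_mul: "cn*(1+t^2) = 1-t^2" using tt by (simp add: cn_eq)
lemma sn_mul: "sn*(1+t^2) = 2*t" using tt by (simp add: sn_eq)

lemma sc1: "sn^2 + cn^2 = 1"
proof -
  have "(sn^2 + cn^2) * (1+t^2)^2 = 1 * (1+t^2)^2" using cn_mul sn_mul by algebra
  then show ?thesis using tt by simp
qed

lemma sn_nz: "sn \<noteq> 0" using sn_mul t_nz by auto

lemma sc1C: "(complex_of_real sn)^2 + (complex_of_real cn)^2 = 1"
proof -
  have "complex_of_real (sn^2 + cn^2) = 1" by (simp add: sc1)
  then show ?thesis by simp
qed

lemma sigC: "\<sigma> \<in> {1,-1} \<Longrightarrow> (complex_of_real \<sigma>)^2 = 1" by auto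
lemma sigR: "\<sigma> \<in> {1,-1} \<Longrightarrow> (\<sigma>::real)^2 = 1" by auto

definition pc :: "real \<Rightarrow> complex \<Rightarrow> cpt3" where
  "pc \<sigma> = phi (of_real R) (of_real sn) (of_real cn) (of_real \<sigma>)"
definition Cs :: "real \<Rightarrow> cpt3 set" where "Cs \<sigma> = range (pc \<sigma>)"

lemma RC: "complex_of_real R \<noteq> 0" using R_pos by simp

lemma mem_Cs:
  assumes "\<sigma> \<in> {1,-1}"
  shows "(x,y,z) \<in> Cs \<sigma> \<longleftrightarrow> tris_P (of_real sn) (of_real cn) x y z = 0
     \<and> Lf (of_real R) (of_real sn) (of_real cn) (of_real \<sigma>) x y = 0"
proof
  assume "(x,y,z) \<in> Cs \<sigma>"
  then obtain w where "pc \<sigma> w = (x,y,z)" by (auto simp: Cs_def)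
  then show "tris_P (of_real sn) (of_real cn) x y z = 0
     \<and> Lf (of_real R) (of_real sn) (of_real cn) (of_real \<sigma>) x y = 0"
    using phi_eqs[OF RC sc1C sigC[OF assms]] by (simp add: pc_def)
next
  assume "tris_P (of_real sn) (of_real cn) x y z = 0
     \<and> Lf (of_real R) (of_real sn) (of_real cn) (of_real \<sigma>) x y = 0"
  then have "(x,y,z) = pc \<sigma> (of_real \<sigma> * (x * of_real cn + y * of_real sn))"
    using eqs_phi[OF RC sc1C sigC[OF assms]] by (simp add: pc_def)
  then show "(x,y,z) \<in> Cs \<sigma>" by (simp add: Cs_def)
qed

lemma pc_u:
  assumes "\<sigma> \<in> {1,-1}" "pc \<sigma> w = (x,y,z)"
  shows "of_real \<sigma> * (x * of_real cn + y * of_real sn) = w"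
  using phi_u[OF sc1C sigC[OF assms(1)]] assms(2) by (simp add: pc_def)

lemma inj_pc: "\<sigma> \<in> {1,-1} \<Longrightarrow> inj (pc \<sigma>)"
  by (rule injI) (metis pc_u prod_cases3)

lemma tris_union: "trisector_C R sn cn = Cs 1 \<union> Cs (-1)"
proof (intro set_eqI iffI)
  fix q assume "q \<in> trisector_C R sn cn"
  then obtain x y z where q: "q = (x,y,z)" and P: "tris_P (of_real sn) (of_real cn) x y z = 0"
    and Q: "tris_Q (of_real R) x y z = 0" by (auto simp: trisector_C_def)
  have "Lf (of_real R) (of_real sn) (of_real cn) (of_real 1) x y = 0
     \<or> Lf (of_real R) (of_real sn) (of_real cn) (of_real (-1)) x y = 0"
    using PQ[OF P sc1C, of "of_real R"] Q by (simp add: Lf_def)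
  then show "q \<in> Cs 1 \<union> Cs (-1)" using mem_Cs[of 1] mem_Cs[of "-1"] P q by auto
next
  fix q assume "q \<in> Cs 1 \<union> Cs (-1)"
  then obtain x y z where q: "q = (x,y,z)" and P: "tris_P (of_real sn) (of_real cn) x y z = 0"
    and L: "Lf (of_real R) (of_real sn) (of_real cn) (of_real 1) x y = 0
     \<or> Lf (of_real R) (of_real sn) (of_real cn) (of_real (-1)) x y = 0"
    using mem_Cs[of 1] mem_Cs[of "-1"] by (cases q) auto
  have "tris_Q (of_real R) x y z = 0"
    using PQ[OF P sc1C, of "of_real R"] L by (auto simp: Lf_def)
  then show "q \<in> trisector_C R sn cn" using P q by (simp add: trisector_C_def)
qed

end


context tri begin

definition Hu :: "complex \<Rightarrow> cpt3 set" where
  "Hu d = {(x,y,z). of_real cn * x + of_real sn * y + 0 * z = d}"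

lemma cplane_Hu: "cplane (Hu d)"
proof -
  have "(complex_of_real cn, complex_of_real sn, 0::complex) \<noteq> (0,0,0)"
    using sc1 by auto
  then show ?thesis unfolding cplane_def Hu_def by blast
qed

lemma Cs_Hu:
  assumes s: "\<sigma> \<in> {1,-1}"
  shows "Cs \<sigma> \<inter> Hu d = {pc \<sigma> (of_real \<sigma> * d)}"
proof (intro set_eqI iffI)
  fix q assume "q \<in> Cs \<sigma> \<inter> Hu d"
  then obtain w x y z where q: "q = (x,y,z)" "pc \<sigma> w = (x,y,z)"
     and h: "of_real cn * x + of_real sn * y = d"
    by (cases q) (auto simp: Cs_def Hu_def)
  have "of_real \<sigma> * (x * of_real cn + y * of_real sn) = w" using pc_u[OF s q(2)] .
  then have "w = of_real \<sigma> * d" using h by (simp add: ac_simps)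
  then show "q \<in> {pc \<sigma> (of_real \<sigma> * d)}" using q by simp
next
  fix q assume "q \<in> {pc \<sigma> (of_real \<sigma> * d)}"
  then have q: "q = pc \<sigma> (of_real \<sigma> * d)" by simp
  obtain x y z where xyz: "pc \<sigma> (of_real \<sigma> * d) = (x,y,z)" by (cases "pc \<sigma> (of_real \<sigma> * d)")
  have "of_real \<sigma> * (x * of_real cn + y * of_real sn) = of_real \<sigma> * d" using pc_u[OF s xyz] .
  then have "x * of_real cn + y * of_real sn = d" using s by auto
  moreover have "q \<in> Cs \<sigma>" unfolding q Cs_def by blast
  ultimately show "q \<in> Cs \<sigma> \<inter> Hu d" using q xyz by (auto simp: Hu_def ac_simps)
qed

lemma algebraic_Cs:
  assumes s: "\<sigma> \<in> {1,-1}"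
  shows "algebraic_set3 (Cs \<sigma>)"
proof -
  have "Cs \<sigma> = {q. \<forall>f\<in>{PP sn cn, LP R sn cn \<sigma>}. eval3 f q = 0}"
  proof (intro set_eqI)
    fix q :: cpt3
    obtain x y z where q: "q = (x,y,z)" by (cases q)
    show "q \<in> Cs \<sigma> \<longleftrightarrow> q \<in> {q. \<forall>f\<in>{PP sn cn, LP R sn cn \<sigma>}. eval3 f q = 0}"
      unfolding q using mem_Cs[OF s] by (simp add: eval_PP eval_LP)
  qed
  then show ?thesis unfolding algebraic_set3_def by (intro exI[of _ "{PP sn cn, LP R sn cn \<sigma>}"]) auto
qed

lemma islimpt_Cs:
  assumes s: "\<sigma> \<in> {1,-1}" and q: "q \<in> Cs \<sigma>"
  shows "q islimpt Cs \<sigma>"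
proof -
  obtain w where "q = pc \<sigma> w" using q by (auto simp: Cs_def)
  then show ?thesis unfolding Cs_def
    using islimpt_range_inj[OF _ inj_pc[OF s]] isCont_phi by (simp add: pc_def)
qed

lemma space_curve_Cs:
  assumes s: "\<sigma> \<in> {1,-1}"
  shows "space_curve (Cs \<sigma>)"
  unfolding space_curve_def
proof (intro conjI ballI)
  show "algebraic_set3 (Cs \<sigma>)" by (rule algebraic_Cs[OF s])
  show "Cs \<sigma> \<noteq> {}" by (simp add: Cs_def)
  fix q assume q: "q \<in> Cs \<sigma>"
  then show "q islimpt Cs \<sigma>" by (rule islimpt_Cs[OF s])
  obtain x y z where xyz: "q = (x,y,z)" by (cases q)
  have "q \<in> Hu (of_real cn * x + of_real sn * y)" by (simp add: Hu_def xyz)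
  moreover have "finite (Cs \<sigma> \<inter> Hu (of_real cn * x + of_real sn * y))" by (simp add: Cs_Hu[OF s])
  ultimately show "\<exists>H. cplane H \<and> q \<in> H \<and> finite (Cs \<sigma> \<inter> H)" using cplane_Hu by blast
qed

lemma Cs_infinite: "\<sigma> \<in> {1,-1} \<Longrightarrow> infinite (Cs \<sigma>)"
  unfolding Cs_def using inj_pc finite_imageD infinite_UNIV_char_0 by blast

lemma Cs_plane_poly:
  fixes a b c0 d :: complex
  shows "\<exists>p. degree p \<le> 4 \<and> Cs \<sigma> \<inter> {(x,y,z). a*x+b*y+c0*z = d} = pc \<sigma> ` {w. poly p w = 0}"
proof -
  obtain p where p: "degree p \<le> 4" "\<forall>w. poly p w = a * fst (pc \<sigma> w)
     + b * fst (snd (pc \<sigma> w)) + c0 * snd (snd (pc \<sigma> w)) - d"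
    using phi_poly[of a "of_real R" "of_real sn" "of_real cn" "of_real \<sigma>" b c0 d]
    unfolding pc_def by blast
  have "Cs \<sigma> \<inter> {(x,y,z). a*x+b*y+c0*z = d} = pc \<sigma> ` {w. poly p w = 0}"
  proof (intro set_eqI iffI)
    fix q assume "q \<in> Cs \<sigma> \<inter> {(x,y,z). a*x+b*y+c0*z = d}"
    then obtain w where w: "q = pc \<sigma> w" by (auto simp: Cs_def)
    have h: "a * fst q + b * fst (snd q) + c0 * snd (snd q) = d"
      using \<open>q \<in> Cs \<sigma> \<inter> _\<close> by (cases q) auto
    then have "poly p w = 0" using p(2) w by simp
    then show "q \<in> pc \<sigma> ` {w. poly p w = 0}" using w by blast
  next
    fix q assume "q \<in> pc \<sigma> ` {w. poly p w = 0}"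
    then obtain w where w: "q = pc \<sigma> w" and h: "poly p w = 0" by blast
    then have "a * fst q + b * fst (snd q) + c0 * snd (snd q) = d" using p(2) by auto
    moreover have "q \<in> Cs \<sigma>" using w by (simp add: Cs_def)
    ultimately show "q \<in> Cs \<sigma> \<inter> {(x,y,z). a*x+b*y+c0*z = d}"
      by (cases q) auto
  qed
  then show ?thesis using p(1) by blast
qed

lemma card_Cs_le:
  assumes s: "\<sigma> \<in> {1,-1}" and H: "cplane H" and fin: "finite (Cs \<sigma> \<inter> H)"
  shows "card (Cs \<sigma> \<inter> H) \<le> 4"
proof -
  obtain a b c0 d where Hd: "H = {(x,y,z). a*x+b*y+c0*z = d}"
    using H unfolding cplane_def by blast
  obtain p where p: "degree p \<le> 4" "Cs \<sigma> \<inter> H = pc \<sigma> ` {w. poly p w = 0}"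
    using Cs_plane_poly[of \<sigma> a b c0 d] unfolding Hd by blast
  show ?thesis
  proof (cases "p = 0")
    case True
    then have "Cs \<sigma> \<inter> H = Cs \<sigma>" using p(2) by (simp add: Cs_def)
    then show ?thesis using fin Cs_infinite[OF s] by simp
  next
    case False
    have "card (Cs \<sigma> \<inter> H) \<le> card {w. poly p w = 0}" unfolding p(2) by (rule card_image_le)
      (rule poly_roots_finite[OF False])
    also have "\<dots> \<le> degree p" by (rule card_poly_roots_bound[OF False])
    finally show ?thesis using p(1) by simp
  qed
qed

end


context tri begin

definition H0 :: "cpt3 set" where "H0 = {(x,y,z). 0*x + 0*y + 1*z = (1/2::complex)}"

lemma cplane_H0: "cplane H0"
  unfolding cplane_def H0_def by (intro exI[of _ 0] exI[of _ 1] exI[of _ "1/2"]) auto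

definition q0 :: real where "q0 = sqrt (1 + t^2)"
definition r1 :: real where "r1 = R*(t+q0)"
definition r2 :: real where "r2 = R*(t-q0)"
definition r3 :: real where "r3 = R*(q0-1)/t"
definition r4 :: real where "r4 = R*(-1-q0)/t"

lemma q0_sq: "q0^2 = 1 + t^2"
  unfolding q0_def by (simp add: add_pos_nonneg)
lemma q0_pos: "q0 > 0"
  unfolding q0_def by (simp add: add_pos_nonneg)

lemma f1_r: "r1^2 - 2*R*t*r1 - R^2 = 0" "r2^2 - 2*R*t*r2 - R^2 = 0"
  unfolding r1_def r2_def using q0_sq by algebra+

lemma f2_r: "t*r3^2 + 2*R*r3 - t*R^2 = 0" "t*r4^2 + 2*R*r4 - t*R^2 = 0"
proof -
  have a: "t*r3 = R*(q0-1)" "t*r4 = R*(-1-q0)" using t_nz by (simp_all add: r3_def r4_def)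
  have "t * (t*r3^2 + 2*R*r3 - t*R^2) = 0" using a(1) q0_sq by algebra
  then show "t*r3^2 + 2*R*r3 - t*R^2 = 0" using t_nz by simp
  have "t * (t*r4^2 + 2*R*r4 - t*R^2) = 0" using a(2) q0_sq by algebra
  then show "t*r4^2 + 2*R*r4 - t*R^2 = 0" using t_nz by simp
qed

lemma no_common:
  assumes "w^2 - 2*R*t*w - R^2 = 0" "t*w^2 + 2*R*w - t*R^2 = 0"
  shows False
proof -
  have "2*R*w*(1+t^2) = 0" using assms by algebra
  then have "w = 0" using R_pos tt by simp
  then show False using assms(1) R_pos by simp
qed

lemma r_distinct: "r1 \<noteq> r2" "r1 \<noteq> r3" "r1 \<noteq> r4" "r2 \<noteq> r3" "r2 \<noteq> r4" "r3 \<noteq> r4"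
proof -
  show "r1 \<noteq> r2" unfolding r1_def r2_def using R_pos q0_pos by simp
  show "r3 \<noteq> r4" unfolding r3_def r4_def using R_pos q0_pos t_nz by (simp add: field_simps)
  show "r1 \<noteq> r3" using no_common f1_r(1) f2_r(1) by metis
  show "r1 \<noteq> r4" using no_common f1_r(1) f2_r(2) by metis
  show "r2 \<noteq> r3" using no_common f1_r(2) f2_r(1) by metis
  show "r2 \<noteq> r4" using no_common f1_r(2) f2_r(2) by metis
qed

lemma card_r: "card (complex_of_real ` {r1,r2,r3,r4}) = 4"
proof -
  have "card {r1,r2,r3,r4} = 4" using r_distinct by simp
  moreover have "card (complex_of_real ` {r1,r2,r3,r4}) = card {r1,r2,r3,r4}"
    by (rule card_image) (rule inj_onI, simp)
  ultimately show ?thesis by simp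
qed

lemma roots_C: "snd (snd (pc \<sigma> w)) = 1/2 \<longleftrightarrow> w \<in> complex_of_real ` {r1,r2,r3,r4}"
proof -
  have h1: "complex_of_real t \<noteq> 0" using t_nz by simp
  have h2: "1 + (complex_of_real t)^2 \<noteq> 0"
  proof -
    have "complex_of_real (1 + t^2) \<noteq> 0" by (metis of_real_eq_0_iff tt)
    then show ?thesis by simp
  qed
  have h3: "(complex_of_real q0)^2 = 1 + (complex_of_real t)^2"
  proof -
    have "complex_of_real (q0^2) = complex_of_real (1 + t^2)" using q0_sq by simp
    then show ?thesis by simp
  qed
  have h4: "complex_of_real cn * (1 + (complex_of_real t)^2) = 1 - (complex_of_real t)^2"
  proof -
    have "complex_of_real (cn * (1+t^2)) = complex_of_real (1-t^2)" using cn_mul by simp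
    then show ?thesis by simp
  qed
  have h5: "complex_of_real sn * (1 + (complex_of_real t)^2) = 2 * complex_of_real t"
  proof -
    have "complex_of_real (sn * (1+t^2)) = complex_of_real (2*t)" using sn_mul by simp
    then show ?thesis by simp
  qed
  have e: "complex_of_real R * (complex_of_real t + complex_of_real q0) = of_real r1"
     "complex_of_real R * (complex_of_real t - complex_of_real q0) = of_real r2"
     "complex_of_real R * (complex_of_real q0 - 1) / complex_of_real t = of_real r3"
     "complex_of_real R * (- 1 - complex_of_real q0) / complex_of_real t = of_real r4"
    by (simp_all add: r1_def r2_def r3_def r4_def)
  show ?thesis
    unfolding pc_def z_half[OF RC h1 h2 h3 h4 h5] e by auto
qed

lemma Cs_H0: "Cs \<sigma> \<inter> H0 = pc \<sigma> ` (complex_of_real ` {r1,r2,r3,r4})"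
proof -
  have "H0 = {q. snd (snd q) = 1/2}" by (auto simp: H0_def)
  then have "Cs \<sigma> \<inter> H0 = pc \<sigma> ` {w. snd (snd (pc \<sigma> w)) = 1/2}"
    unfolding Cs_def by blast
  also have "{w. snd (snd (pc \<sigma> w)) = 1/2} = complex_of_real ` {r1,r2,r3,r4}"
    using roots_C by blast
  finally show ?thesis .
qed

lemma card_Cs_H0: "\<sigma> \<in> {1,-1} \<Longrightarrow> card (Cs \<sigma> \<inter> H0) = 4"
  unfolding Cs_H0 using card_r inj_pc
  by (metis card_image inj_on_subset subset_UNIV)

lemma deg4_Cs:
  assumes s: "\<sigma> \<in> {1,-1}"
  shows "space_curve_of_degree (Cs \<sigma>) 4"
  unfolding space_curve_of_degree_def
proof (intro conjI allI impI)
  show "space_curve (Cs \<sigma>)" by (rule space_curve_Cs[OF s])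
  fix H assume "cplane H \<and> finite (Cs \<sigma> \<inter> H)"
  then show "card (Cs \<sigma> \<inter> H) \<le> 4" using card_Cs_le[OF s] by blast
next
  have "finite (Cs \<sigma> \<inter> H0)" unfolding Cs_H0 by simp
  then show "\<exists>H. cplane H \<and> finite (Cs \<sigma> \<inter> H) \<and> card (Cs \<sigma> \<inter> H) = 4"
    using cplane_H0 card_Cs_H0[OF s] by blast
qed

end


context tri begin

lemma algebraic_T: "algebraic_set3 (trisector_C R sn cn)"
proof -
  have "trisector_C R sn cn = {q. \<forall>f\<in>{PP sn cn, QP R}. eval3 f q = 0}"
  proof (intro set_eqI)
    fix q :: cpt3
    obtain x y z where q: "q = (x,y,z)" by (cases q)
    show "q \<in> trisector_C R sn cn \<longleftrightarrow> q \<in> {q. \<forall>f\<in>{PP sn cn, QP R}. eval3 f q = 0}"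
      unfolding q by (simp add: eval_PP eval_QP trisector_C_def)
  qed
  then show ?thesis unfolding algebraic_set3_def by (intro exI[of _ "{PP sn cn, QP R}"]) auto
qed

lemma T_Hu: "trisector_C R sn cn \<inter> Hu d = {pc 1 d, pc (-1) (-d)}"
  unfolding tris_union Int_Un_distrib2 using Cs_Hu[of 1 d] Cs_Hu[of "-1" d] by (simp add: insert_commute)

lemma space_curve_T: "space_curve (trisector_C R sn cn)"
  unfolding space_curve_def
proof (intro conjI ballI)
  show "algebraic_set3 (trisector_C R sn cn)" by (rule algebraic_T)
  show "trisector_C R sn cn \<noteq> {}" by (simp add: tris_union Cs_def)
  fix q assume q: "q \<in> trisector_C R sn cn"
  show "q islimpt trisector_C R sn cn"
  proof (cases "q \<in> Cs 1")
    case True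
    then show ?thesis using islimpt_Cs[of 1 q] islimpt_subset[of q "Cs 1"] by (simp add: tris_union)
  next
    case False
    then have "q \<in> Cs (-1)" using q by (simp add: tris_union)
    then show ?thesis using islimpt_Cs[of "-1" q] islimpt_subset[of q "Cs (-1)"] by (simp add: tris_union)
  qed
  obtain x y z where xyz: "q = (x,y,z)" by (cases q)
  have "q \<in> Hu (of_real cn * x + of_real sn * y)" by (simp add: Hu_def xyz)
  moreover have "finite (trisector_C R sn cn \<inter> Hu (of_real cn * x + of_real sn * y))" by (simp add: T_Hu)
  ultimately show "\<exists>H. cplane H \<and> q \<in> H \<and> finite (trisector_C R sn cn \<inter> H)" using cplane_Hu by blast
qed

lemma disjoint_H0: "(Cs 1 \<inter> H0) \<inter> (Cs (-1) \<inter> H0) = {}"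
proof (rule ccontr)
  assume "(Cs 1 \<inter> H0) \<inter> (Cs (-1) \<inter> H0) \<noteq> {}"
  then obtain x y z where a: "(x,y,z) \<in> Cs 1" "(x,y,z) \<in> Cs (-1)" "(x,y,z) \<in> H0" by auto
  have P: "tris_P (of_real sn) (of_real cn) x y z = 0"
    and L1: "Lf (of_real R) (of_real sn) (of_real cn) 1 x y = 0"
    and L2: "Lf (of_real R) (of_real sn) (of_real cn) (-1) x y = 0"
    using mem_Cs[of 1 x y z] mem_Cs[of "-1" x y z] a by auto
  have "2*z = 1 - (of_real R)^2 * (of_real sn)^2" using node_eqs[OF RC sc1C P L1 L2] by blast
  moreover have "z = 1/2" using a(3) by (simp add: H0_def)
  ultimately have "(complex_of_real R)^2 * (of_real sn)^2 = 0" by simp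
  then show False using R_pos sn_nz by simp
qed

lemma deg8_T: "space_curve_of_degree (trisector_C R sn cn) 8"
  unfolding space_curve_of_degree_def
proof (intro conjI allI impI)
  show "space_curve (trisector_C R sn cn)" by (rule space_curve_T)
  fix H assume H: "cplane H \<and> finite (trisector_C R sn cn \<inter> H)"
  have eq: "trisector_C R sn cn \<inter> H = (Cs 1 \<inter> H) \<union> (Cs (-1) \<inter> H)" by (auto simp: tris_union)
  have f1: "finite (Cs 1 \<inter> H)" "finite (Cs (-1) \<inter> H)" using H eq by auto
  have "card (trisector_C R sn cn \<inter> H) \<le> card (Cs 1 \<inter> H) + card (Cs (-1) \<inter> H)"
    unfolding eq by (rule card_Un_le)
  also have "\<dots> \<le> 4 + 4" using card_Cs_le[of 1 H] card_Cs_le[of "-1" H] H f1 by (intro add_mono) auto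
  finally show "card (trisector_C R sn cn \<inter> H) \<le> 8" by simp
next
  have eq: "trisector_C R sn cn \<inter> H0 = (Cs 1 \<inter> H0) \<union> (Cs (-1) \<inter> H0)" by (auto simp: tris_union)
  have f: "finite (Cs 1 \<inter> H0)" "finite (Cs (-1) \<inter> H0)" by (simp_all add: Cs_H0)
  have "card (trisector_C R sn cn \<inter> H0) = 4 + 4"
    unfolding eq card_Un_disjoint[OF f disjoint_H0] using card_Cs_H0[of 1] card_Cs_H0[of "-1"] by simp
  moreover have "finite (trisector_C R sn cn \<inter> H0)" unfolding eq using f by simp
  ultimately show "\<exists>H. cplane H \<and> finite (trisector_C R sn cn \<inter> H) \<and> card (trisector_C R sn cn \<inter> H) = 8"
    using cplane_H0 by (intro exI[of _ H0]) simp
qed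

lemma real_mem_Cs:
  assumes s: "\<sigma> \<in> {1,-1}"
  shows "cpt_of_real (x,y,z) \<in> Cs \<sigma> \<longleftrightarrow> tris_P sn cn x y z = 0 \<and> Lf R sn cn \<sigma> x y = 0"
proof -
  have a: "tris_P (complex_of_real sn) (of_real cn) (of_real x) (of_real y) (of_real z)
      = of_real (tris_P sn cn x y z)" by (simp add: tris_P_def)
  have b: "Lf (complex_of_real R) (of_real sn) (of_real cn) (of_real \<sigma>) (of_real x) (of_real y)
      = of_real (Lf R sn cn \<sigma> x y)" by (simp add: Lf_def)
  show ?thesis unfolding cpt_of_real_def using mem_Cs[OF s] a b by simp
qed

lemma node_sat:
  assumes "\<rho> \<in> {1,-1}"
  shows "tris_P sn cn (\<rho>*R*cn) (\<rho>*R * sn) ((1 - R^2 * sn^2)/2) = 0"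
    "Lf R sn cn 1 (\<rho>*R*cn) (\<rho>*R * sn) = 0" "Lf R sn cn (-1) (\<rho>*R*cn) (\<rho>*R * sn) = 0"
proof -
  have r: "\<rho>^2 = 1" using assms by auto
  define Z where "Z = (1 - R^2 * sn^2)/2"
  have "2*Z = 1 - R^2 * sn^2" by (simp add: Z_def)
  then have "tris_P sn cn (\<rho>*R*cn) (\<rho>*R * sn) Z = 0"
    unfolding tris_P_def using r by (simp add: power_mult_distrib mult.commute mult.left_commute)
  then show "tris_P sn cn (\<rho>*R*cn) (\<rho>*R * sn) ((1 - R^2 * sn^2)/2) = 0" by (simp add: Z_def)
  show "Lf R sn cn 1 (\<rho>*R*cn) (\<rho>*R * sn) = 0" unfolding Lf_def using r sc1 by algebra
  show "Lf R sn cn (-1) (\<rho>*R*cn) (\<rho>*R * sn) = 0" unfolding Lf_def using r sc1 by algebra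
qed

lemma real_inter:
  "{p. cpt_of_real p \<in> Cs 1 \<inter> Cs (-1)}
     = {(R * cn, R * sn, (1 - R^2 * sn^2)/2), (-R * cn, -R * sn, (1 - R^2 * sn^2)/2)}"
proof (intro set_eqI iffI)
  fix p assume "p \<in> {p. cpt_of_real p \<in> Cs 1 \<inter> Cs (-1)}"
  then obtain x y z where p: "p = (x,y,z)" and P: "tris_P sn cn x y z = 0"
    and L1: "Lf R sn cn 1 x y = 0" and L2: "Lf R sn cn (-1) x y = 0"
    using real_mem_Cs[of 1] real_mem_Cs[of "-1"] by (cases p) auto
  have n: "(x * cn + y * sn)^2 = R^2" "2*z = 1 - R^2 * sn^2"
      "x = (x * cn + y * sn) * cn" "y = (x * cn + y * sn) * sn"
    using node_eqs[OF _ sc1 P L1 L2] R_pos by auto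
  have z: "z = (1 - R^2 * sn^2)/2" using n(2) by simp
  from n(1) have "x * cn + y * sn = R \<or> x * cn + y * sn = -R" by (simp add: power2_eq_iff)
  then show "p \<in> {(R * cn, R * sn, (1 - R^2 * sn^2)/2), (-R * cn, -R * sn, (1 - R^2 * sn^2)/2)}"
  proof
    assume u: "x * cn + y * sn = R"
    then have "x = R * cn" "y = R * sn" using n(3,4) by simp_all
    then show ?thesis using p z by simp
  next
    assume u: "x * cn + y * sn = -R"
    then have "x = -R * cn" "y = -R * sn" using n(3,4) by simp_all
    then show ?thesis using p z by simp
  qed
next
  fix p assume "p \<in> {(R * cn, R * sn, (1 - R^2 * sn^2)/2), (-R * cn, -R * sn, (1 - R^2 * sn^2)/2)}"
  then have "p = (1*R*cn, 1*R * sn, (1 - R^2 * sn^2)/2) \<or> p = ((-1)*R*cn, (-1)*R * sn, (1 - R^2 * sn^2)/2)"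
    by auto
  then obtain \<rho> where r: "\<rho> \<in> {1,-1::real}" and p: "p = (\<rho>*R*cn, \<rho>*R * sn, (1 - R^2 * sn^2)/2)"
    by blast
  show "p \<in> {p. cpt_of_real p \<in> Cs 1 \<inter> Cs (-1)}"
    using node_sat[OF r] real_mem_Cs[of 1] real_mem_Cs[of "-1"] p by simp
qed

end


lemma poly_curve_deriv:
  fixes p1 p2 p3 :: "real poly"
  shows "((\<lambda>\<tau>. (poly p1 \<tau>, poly p2 \<tau>, poly p3 \<tau>)) has_vector_derivative
     (poly (pderiv p1) t, poly (pderiv p2) t, poly (pderiv p3) t)) (at t)"
  by (intro has_vector_derivative_Pair)
     (simp_all add: has_real_derivative_iff_has_vector_derivative[symmetric])

lemma poly_curve_smooth:
  fixes p1 p2 p3 :: "real poly"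
  shows "smooth_curve_on I (\<lambda>\<tau>. (poly p1 \<tau>, poly p2 \<tau>, poly p3 \<tau>))"
  unfolding smooth_curve_on_def
proof (intro exI[of _ "\<lambda>n \<tau>. (poly ((pderiv^^n) p1) \<tau>, poly ((pderiv^^n) p2) \<tau>, poly ((pderiv^^n) p3) \<tau>)"] conjI ballI allI)
  fix n t
  show "((\<lambda>\<tau>. (poly ((pderiv^^n) p1) \<tau>, poly ((pderiv^^n) p2) \<tau>, poly ((pderiv^^n) p3) \<tau>)) has_vector_derivative
     (poly ((pderiv^^Suc n) p1) t, poly ((pderiv^^Suc n) p2) t, poly ((pderiv^^Suc n) p3) t)) (at t)"
    using poly_curve_deriv[of "(pderiv^^n) p1" "(pderiv^^n) p2" "(pderiv^^n) p3" t] by simp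
qed simp

context tri begin

definition gb :: "real \<Rightarrow> real \<Rightarrow> real \<Rightarrow> pt3" where
  "gb \<sigma> \<rho> \<tau> = phi R sn cn \<sigma> (\<sigma>*\<rho>*R + \<tau>)"

lemma gb_poly: "\<exists>q1 q2 q3. gb \<sigma> \<rho> = (\<lambda>\<tau>. (poly q1 \<tau>, poly q2 \<tau>, poly q3 \<tau>))"
proof -
  obtain p1 p2 p3 where p: "\<forall>w. phi R sn cn \<sigma> w = (poly p1 w, poly p2 w, poly p3 w)"
    using phi_polys by blast
  let ?s = "[:\<sigma>*\<rho>*R, 1:]"
  have "gb \<sigma> \<rho> = (\<lambda>\<tau>. (poly (pcompose p1 ?s) \<tau>, poly (pcompose p2 ?s) \<tau>, poly (pcompose p3 ?s) \<tau>))"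
    by (auto simp: fun_eq_iff gb_def p poly_pcompose)
  then show ?thesis by blast
qed

lemma RR: "R \<noteq> 0" using R_pos by simp

lemma gb_u:
  assumes s: "\<sigma> \<in> {1,-1}"
  shows "fst (gb \<sigma> \<rho> \<tau>) * cn + fst (snd (gb \<sigma> \<rho> \<tau>)) * sn = \<rho>*R + \<sigma>*\<tau>"
proof -
  obtain x y z where xyz: "gb \<sigma> \<rho> \<tau> = (x,y,z)" by (cases "gb \<sigma> \<rho> \<tau>")
  have "\<sigma> * (x * cn + y * sn) = \<sigma>*\<rho>*R + \<tau>"
    using phi_u[OF sc1 sigR[OF s]] xyz by (simp add: gb_def)
  then have "\<sigma> * (\<sigma> * (x * cn + y * sn)) = \<sigma> * (\<sigma>*\<rho>*R + \<tau>)" by simp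
  then have "x * cn + y * sn = \<rho>*R + \<sigma>*\<tau>" using s by (auto simp: algebra_simps)
  then show ?thesis using xyz by simp
qed

lemma gb_v:
  assumes s: "\<sigma> \<in> {1,-1}"
  shows "fst (gb \<sigma> \<rho> \<tau>) * sn - fst (snd (gb \<sigma> \<rho> \<tau>)) * cn = \<sigma> * (((\<sigma>*\<rho>*R + \<tau>)^2 - R^2)/(2*R))"
proof -
  obtain x y z where xyz: "gb \<sigma> \<rho> \<tau> = (x,y,z)" by (cases "gb \<sigma> \<rho> \<tau>")
  have "x * sn - y * cn = \<sigma> * Vf R (\<sigma>*\<rho>*R + \<tau>)"
    using phi_v[OF sc1 sigR[OF s]] xyz by (simp add: gb_def)
  then show ?thesis using xyz by (simp add: Vf_def)
qed

lemma gb_0: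
  assumes s: "\<sigma> \<in> {1,-1}" and r: "\<rho> \<in> {1,-1}"
  shows "gb \<sigma> \<rho> 0 = (\<rho>*R*cn, \<rho>*R * sn, (1 - R^2 * sn^2)/2)"
proof -
  have w2: "(\<sigma>*\<rho>*R)^2 = R^2" using s r by auto
  have V: "Vf R (\<sigma>*\<rho>*R) = 0" by (simp add: Vf_def w2)
  have ss: "\<sigma>*(\<sigma>*a) = a" for a using s by auto
  have sq: "(\<sigma>*\<rho>*R * sn)^2 = R^2 * sn^2" using w2 by (simp add: power_mult_distrib)
  have "gb \<sigma> \<rho> 0 = phi R sn cn \<sigma> (\<sigma>*\<rho>*R)" by (simp add: gb_def)
  also have "\<dots> = (\<sigma>*((\<sigma>*\<rho>*R)*cn + 0 * sn), \<sigma>*((\<sigma>*\<rho>*R) * sn - 0*cn),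
      (1 - ((\<sigma>*\<rho>*R) * sn - 0*cn)^2 + 0^2)/2)" by (simp only: phi_def V)
  also have "\<dots> = (\<rho>*R*cn, \<rho>*R * sn, (1 - R^2 * sn^2)/2)"
    using sq by (simp add: mult.assoc ss)
  finally show ?thesis .
qed

lemma gb_deriv:
  assumes s: "\<sigma> \<in> {1,-1}" and r: "\<rho> \<in> {1,-1}"
  obtains d1 d2 d3 where "(gb \<sigma> \<rho> has_vector_derivative (d1,d2,d3)) (at \<tau>)"
    "cn * d1 + sn * d2 = \<sigma>"
    "\<tau> = 0 \<Longrightarrow> sn * d1 - cn * d2 = \<rho>"
proof -
  obtain q1 q2 q3 where q: "gb \<sigma> \<rho> = (\<lambda>\<tau>. (poly q1 \<tau>, poly q2 \<tau>, poly q3 \<tau>))"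
    using gb_poly by blast
  define d1 where "d1 = poly (pderiv q1) \<tau>"
  define d2 where "d2 = poly (pderiv q2) \<tau>"
  define d3 where "d3 = poly (pderiv q3) \<tau>"
  have hd: "(gb \<sigma> \<rho> has_vector_derivative (d1,d2,d3)) (at \<tau>)"
    unfolding q d1_def d2_def d3_def by (rule poly_curve_deriv)
  have fu: "(\<lambda>\<tau>. cn * poly q1 \<tau> + sn * poly q2 \<tau>) = (\<lambda>\<tau>. \<rho>*R + \<sigma>*\<tau>)"
    using gb_u[OF s, of \<rho>] unfolding q by (auto simp: fun_eq_iff ac_simps)
  have D1: "((\<lambda>\<tau>. cn * poly q1 \<tau> + sn * poly q2 \<tau>) has_real_derivative (cn * d1 + sn * d2)) (at \<tau>)"
    unfolding d1_def d2_def by (intro DERIV_add DERIV_cmult poly_DERIV)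
  have D2: "((\<lambda>\<tau>. \<rho>*R + \<sigma>*\<tau>) has_real_derivative \<sigma>) (at \<tau>)"
    by (auto intro!: derivative_eq_intros)
  have 1: "cn * d1 + sn * d2 = \<sigma>" using DERIV_unique[OF D1[unfolded fu] D2] .
  have 2: "sn * d1 - cn * d2 = \<rho>" if "\<tau> = 0"
  proof -
    have fv: "(\<lambda>\<tau>. sn * poly q1 \<tau> - cn * poly q2 \<tau>) = (\<lambda>\<tau>. \<sigma> * (((\<sigma>*\<rho>*R + \<tau>)^2 - R^2)/(2*R)))"
      using gb_v[OF s, of \<rho>] unfolding q by (auto simp: fun_eq_iff ac_simps)
    have E1: "((\<lambda>\<tau>. sn * poly q1 \<tau> - cn * poly q2 \<tau>) has_real_derivative (sn * d1 - cn * d2)) (at \<tau>)"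
      unfolding d1_def d2_def by (intro DERIV_diff DERIV_cmult poly_DERIV)
    have E2: "((\<lambda>\<tau>. \<sigma> * (((\<sigma>*\<rho>*R + \<tau>)^2 - R^2)/(2*R))) has_real_derivative
        \<sigma> * ((2 * (\<sigma>*\<rho>*R + \<tau>) * 1) / (2*R))) (at \<tau>)"
      by (auto intro!: derivative_eq_intros simp: power2_eq_square algebra_simps add_divide_distrib)
    have "sn * d1 - cn * d2 = \<sigma> * ((2 * (\<sigma>*\<rho>*R + \<tau>) * 1) / (2*R))"
      using DERIV_unique[OF E1[unfolded fv] E2] .
    also have "\<dots> = \<rho>" using that s RR by (auto simp: field_simps)
    finally show ?thesis .
  qed
  show ?thesis using that hd 1 2 by blast
qed

end


context tri begin

lemma real_T:
  "(x,y,z) \<in> trisector R sn cn \<longleftrightarrow> tris_P sn cn x y z = 0 \<and> (Lf R sn cn 1 x y = 0 \<or> Lf R sn cn (-1) x y = 0)"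
proof -
  have "tris_P sn cn x y z = 0 \<Longrightarrow> tris_Q R x y z = Lf R sn cn 1 x y * Lf R sn cn (-1) x y"
    using PQ[OF _ sc1, of x y z R] by (simp add: Lf_def)
  then show ?thesis by (auto simp: trisector_def)
qed

lemma gb_in_T: "\<sigma> \<in> {1,-1} \<Longrightarrow> gb \<sigma> \<rho> \<tau> \<in> trisector R sn cn"
proof -
  assume s: "\<sigma> \<in> {1,-1}"
  obtain x y z where xyz: "gb \<sigma> \<rho> \<tau> = (x,y,z)" by (cases "gb \<sigma> \<rho> \<tau>")
  have "tris_P sn cn x y z = 0 \<and> Lf R sn cn \<sigma> x y = 0"
    using phi_eqs[OF RR sc1 sigR[OF s]] xyz by (simp add: gb_def)
  then show ?thesis using s xyz real_T by auto
qed

definition Ib :: "real set" where "Ib = {-1<..<1}"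

lemma inj_gb: "\<sigma> \<in> {1,-1} \<Longrightarrow> inj_on (gb \<sigma> \<rho>) A"
proof (rule inj_onI)
  fix a b assume s: "\<sigma> \<in> {1,-1}" and eq: "gb \<sigma> \<rho> a = gb \<sigma> \<rho> b"
  have "\<rho>*R + \<sigma>*a = \<rho>*R + \<sigma>*b" using gb_u[OF s, of \<rho> a] gb_u[OF s, of \<rho> b] eq by metis
  moreover have "\<sigma> \<noteq> 0" using s by auto
  ultimately show "a = b" by simp
qed

lemma smooth_branch_gb:
  assumes s: "\<sigma> \<in> {1,-1}" and r: "\<rho> \<in> {1,-1}"
  shows "smooth_branch 1 (gb \<sigma> \<rho>) (\<rho>*R*cn, \<rho>*R * sn, (1 - R^2 * sn^2)/2)"
  unfolding smooth_branch_def
proof (intro conjI ballI)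
  show "(0::real) < 1" by simp
  obtain q1 q2 q3 where q: "gb \<sigma> \<rho> = (\<lambda>\<tau>. (poly q1 \<tau>, poly q2 \<tau>, poly q3 \<tau>))"
    using gb_poly by blast
  show "smooth_curve_on {-1<..<1} (gb \<sigma> \<rho>)" unfolding q by (rule poly_curve_smooth)
  show "gb \<sigma> \<rho> 0 = (\<rho>*R*cn, \<rho>*R * sn, (1 - R^2 * sn^2)/2)" by (rule gb_0[OF s r])
  show "inj_on (gb \<sigma> \<rho>) {-1<..<1}" by (rule inj_gb[OF s])
  let ?h = "\<lambda>p::pt3. \<sigma> * (fst p * cn + fst (snd p) * sn - \<rho>*R)"
  have "continuous_on (gb \<sigma> \<rho> ` {-1<..<1}) ?h" by (intro continuous_intros)
  moreover have "inv_into {-1<..<1} (gb \<sigma> \<rho>) p = ?h p" if pin: "p \<in> gb \<sigma> \<rho> ` {-1<..<1}" for p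
  proof -
    obtain \<tau> where t: "\<tau> \<in> {-1<..<1}" "p = gb \<sigma> \<rho> \<tau>" using pin by blast
    have "inv_into {-1<..<1} (gb \<sigma> \<rho>) p = \<tau>" using t inj_gb[OF s] by (simp add: inv_into_f_f)
    moreover have "?h p = \<tau>" using t(2) gb_u[OF s, of \<rho> \<tau>] s by auto
    ultimately show ?thesis by simp
  qed
  ultimately show "continuous_on (gb \<sigma> \<rho> ` {-1<..<1}) (inv_into {-1<..<1} (gb \<sigma> \<rho>))"
    using continuous_on_cong[of _ _ "inv_into {-1<..<1} (gb \<sigma> \<rho>)" ?h] by auto
  fix \<tau> :: real
  obtain d1 d2 d3 where d: "(gb \<sigma> \<rho> has_vector_derivative (d1,d2,d3)) (at \<tau>)" "cn * d1 + sn * d2 = \<sigma>"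
    using gb_deriv[OF s r] by metis
  have "vector_derivative (gb \<sigma> \<rho>) (at \<tau>) = (d1,d2,d3)" using vector_derivative_at[OF d(1)] .
  moreover have "(d1,d2,d3) \<noteq> 0" using d(2) s by (auto simp: zero_prod_def)
  ultimately show "vector_derivative (gb \<sigma> \<rho>) (at \<tau>) \<noteq> 0" by simp
qed

lemma node:
  assumes r: "\<rho> \<in> {1,-1}"
  shows "ordinary_real_node (trisector R sn cn) (\<rho>*R*cn, \<rho>*R * sn, (1 - R^2 * sn^2)/2)"
  unfolding ordinary_real_node_def
proof (intro conjI exI)
  let ?N = "(\<rho>*R*cn, \<rho>*R * sn, (1 - R^2 * sn^2)/2)"
  show "?N \<in> trisector R sn cn" using gb_in_T[of 1 \<rho> 0] gb_0[of 1 \<rho>] r by simp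
  let ?U = "{p::pt3. \<bar>fst p * cn + fst (snd p) * sn - \<rho>*R\<bar> < 1}"
  show "open ?U" by (intro open_Collect_less continuous_intros)
  have "\<rho>*R*cn*cn + \<rho>*R * sn * sn = \<rho>*R" using sc1 by algebra
  then show "?N \<in> ?U" by simp
  show "smooth_branch 1 (gb 1 \<rho>) ?N" by (rule smooth_branch_gb) (use r in auto)
  show "smooth_branch 1 (gb (-1) \<rho>) ?N" by (rule smooth_branch_gb) (use r in auto)
  obtain a1 a2 a3 where A: "(gb 1 \<rho> has_vector_derivative (a1,a2,a3)) (at 0)" "cn * a1 + sn * a2 = 1"
     "sn * a1 - cn * a2 = \<rho>"
    using gb_deriv[of 1 \<rho> 0] r by auto
  obtain b1 b2 b3 where B: "(gb (-1) \<rho> has_vector_derivative (b1,b2,b3)) (at 0)" "cn * b1 + sn * b2 = -1"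
     "sn * b1 - cn * b2 = \<rho>"
    using gb_deriv[of "-1" \<rho> 0] r by auto
  show "\<forall>a. vector_derivative (gb (-1) \<rho>) (at 0) \<noteq> a *\<^sub>R vector_derivative (gb 1 \<rho>) (at 0)"
  proof (intro allI notI)
    fix a assume "vector_derivative (gb (-1) \<rho>) (at 0) = a *\<^sub>R vector_derivative (gb 1 \<rho>) (at 0)"
    then have e: "b1 = a * a1" "b2 = a * a2"
      unfolding vector_derivative_at[OF A(1)] vector_derivative_at[OF B(1)] by auto
    have "a = -1" using A(2) B(2) unfolding e by (metis mult.left_commute distrib_left mult.right_neutral)
    then have "\<rho> = -\<rho>" using A(3) B(3) unfolding e by (metis mult_minus_left mult_1 right_diff_distrib mult.left_commute)
    then show False using r by auto
  qed
  show "trisector R sn cn \<inter> ?U = gb 1 \<rho> ` {-1<..<1} \<union> gb (-1) \<rho> ` {-1<..<1}"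
  proof (intro set_eqI iffI)
    fix p assume p: "p \<in> trisector R sn cn \<inter> ?U"
    obtain x y z where xyz: "p = (x,y,z)" by (cases p)
    have P: "tris_P sn cn x y z = 0" and L: "Lf R sn cn 1 x y = 0 \<or> Lf R sn cn (-1) x y = 0"
      using p xyz real_T by auto
    have uU: "\<bar>x * cn + y * sn - \<rho>*R\<bar> < 1" using p xyz by simp
    from L obtain \<sigma> where s: "\<sigma> \<in> {1,-1}" and Ls: "Lf R sn cn \<sigma> x y = 0" by blast
    define \<tau> where "\<tau> = \<sigma> * (x * cn + y * sn - \<rho>*R)"
    have ss: "\<sigma>*\<sigma> = 1" using s by auto
    have "\<sigma>*\<rho>*R + \<tau> = \<sigma> * (x * cn + y * sn)" unfolding \<tau>_def by (simp add: algebra_simps)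
    then have "p = gb \<sigma> \<rho> \<tau>" using eqs_phi[OF RR sc1 sigR[OF s] P Ls] xyz by (simp add: gb_def)
    moreover have "\<tau> \<in> {-1<..<1}" using uU s unfolding \<tau>_def by (auto simp: abs_mult abs_less_iff)
    ultimately show "p \<in> gb 1 \<rho> ` {-1<..<1} \<union> gb (-1) \<rho> ` {-1<..<1}" using s by auto
  next
    fix p assume "p \<in> gb 1 \<rho> ` {-1<..<1} \<union> gb (-1) \<rho> ` {-1<..<1}"
    then obtain \<sigma> \<tau> where s: "\<sigma> \<in> {1,-1}" and t: "\<tau> \<in> {-1<..<1}" and p: "p = gb \<sigma> \<rho> \<tau>" by blast
    have "p \<in> trisector R sn cn" using gb_in_T[OF s] p by simp
    moreover have "\<bar>fst p * cn + fst (snd p) * sn - \<rho>*R\<bar> < 1" using gb_u[OF s, of \<rho> \<tau>] p t s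
      by (auto simp: abs_mult)
    ultimately show "p \<in> trisector R sn cn \<inter> ?U" by simp
  qed
qed

end

theorem theorem6:
  fixes R t :: real
  assumes "R > 0" and "t \<noteq> 0"
  defines "c \<equiv> (1 - t^2) / (1 + t^2)" and "s \<equiv> 2*t / (1 + t^2)"
  shows "space_curve_of_degree (trisector_C R s c) 8
    \<and> (\<exists>C1 C2. space_curve_of_degree C1 4 \<and> space_curve_of_degree C2 4
         \<and> trisector_C R s c = C1 \<union> C2
         \<and> {p. cpt_of_real p \<in> C1 \<inter> C2}
             = {(R * c, R * s, (1 - R^2 * s^2)/2), (-R * c, -R * s, (1 - R^2 * s^2)/2)})
    \<and> ordinary_real_node (trisector R s c) (R * c, R * s, (1 - R^2 * s^2)/2)
    \<and> ordinary_real_node (trisector R s c) (-R * c, -R * s, (1 - R^2 * s^2)/2)"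
proof -
  interpret tri R t c s
    by unfold_locales (use assms in \<open>auto simp: c_def s_def\<close>)
  have 1: "space_curve_of_degree (trisector_C R s c) 8" by (rule deg8_T)
  have 2: "\<exists>C1 C2. space_curve_of_degree C1 4 \<and> space_curve_of_degree C2 4
         \<and> trisector_C R s c = C1 \<union> C2
         \<and> {p. cpt_of_real p \<in> C1 \<inter> C2}
             = {(R * c, R * s, (1 - R^2 * s^2)/2), (-R * c, -R * s, (1 - R^2 * s^2)/2)}"
    by (intro exI[of _ "Cs 1"] exI[of _ "Cs (-1)"] conjI deg4_Cs tris_union real_inter) auto
  have 3: "ordinary_real_node (trisector R s c) (R * c, R * s, (1 - R^2 * s^2)/2)"
    using node[of 1] by simp
  have 4: "ordinary_real_node (trisector R s c) (-R * c, -R * s, (1 - R^2 * s^2)/2)"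
    using node[of "-1"] by simp
  show ?thesis using 1 2 3 4 by blast
qed

end
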